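(* Let $\phi:H\to H$ be a coalgebra automorphism. Then there is an integer $r$ such that for every $n\in\mathbb{Z}$, $$\phi(x^n)=x^{n+r},\qquad \phi(x^ny)=\alpha_nx^{n+r}y+\beta_n(x^{n+r+1}-x^{n+r})$$ for some $\alpha_n\in k^\times$ and $\beta_n\in k$.
   Context: Let $k$ be a field and $0\neq q\in k$ not a root of unity. $H=k_q[x,x^{-1},y]$ is the $k$-algebra generated by $x,x^{-1},y$ with $xx^{-1}=x^{-1}x=1$, $yx=qxy$, a Hopf algebra with $\Delta(x)=x\otimes x$, $\Delta(x^{-1})=x^{-1}\otimes x^{-1}$, $\Delta(y)=y\otimes x+1\otimes y$, $\varepsilon(x)=1$, $\varepsilon(y)=0$; $\{x^ny^m:n\in\mathbb{Z},m\in\mathbb{N}\}$ is a $k$-basis. *)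

theory Defs
  imports Main
begin

(* Elements of H = k_q[x,x^-1,y]: finitely supported coefficient functions on the
   basis {x^n y^m : n \<in> int, m \<in> nat}, indexed by (n,m).
   Elements of H \<otimes> H: finitely supported functions on pairs of basis indices,
   ((a,b),(c,d)) standing for x^a y^b \<otimes> x^c y^d. *)

type_synonym 'k H = "int \<times> nat \<Rightarrow> 'k"
type_synonym 'k HH = "(int \<times> nat) \<times> (int \<times> nat) \<Rightarrow> 'k"

definition supp :: "('a \<Rightarrow> 'k::zero) \<Rightarrow> 'a set" where
  "supp f = {a. f a \<noteq> 0}"

definition fin :: "('a \<Rightarrow> 'k::zero) \<Rightarrow> bool" where
  "fin f \<longleftrightarrow> finite (supp f)"

definition basis :: "'a \<Rightarrow> ('a \<Rightarrow> 'k::{zero,one})" where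
  "basis u = (\<lambda>p. if p = u then 1 else 0)"

definition mon :: "int \<Rightarrow> nat \<Rightarrow> 'k::{zero,one} H" where
  "mon n m = basis (n, m)"

(* multiplication in the algebra H \<otimes> H, using
   (x^a y^b)(x^c y^d) = q^(b c) x^(a+c) y^(b+d)  (from yx = qxy) in each factor *)
definition tmul :: "'k::field \<Rightarrow> 'k HH \<Rightarrow> 'k HH \<Rightarrow> 'k HH" where
  "tmul q s t = (\<lambda>z. \<Sum>(a, b) \<in> {(a, b). a \<in> supp s \<and> b \<in> supp t \<and>
        fst (fst a) + fst (fst b) = fst (fst z) \<and> snd (fst a) + snd (fst b) = snd (fst z) \<and>
        fst (snd a) + fst (snd b) = fst (snd z) \<and> snd (snd a) + snd (snd b) = snd (snd z)}.
      s a * t b * q powi (int (snd (fst a)) * fst (fst b) + int (snd (snd a)) * fst (snd b)))"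

primrec tpow :: "'k::field \<Rightarrow> 'k HH \<Rightarrow> nat \<Rightarrow> 'k HH" where
  "tpow q s 0 = basis ((0, 0), (0, 0))"
| "tpow q s (Suc m) = tmul q (tpow q s m) s"

definition Dy :: "'k::field HH" where
  "Dy = (\<lambda>p. basis ((0, 1), (1, 0)) p + basis ((0, 0), (0, 1)) p)"

(* \<Delta>(x^n y^m) = \<Delta>(x)^n \<Delta>(y)^m = (x^n \<otimes> x^n) \<Delta>(y)^m *)
definition DeltaMon :: "'k::field \<Rightarrow> int \<times> nat \<Rightarrow> 'k HH" where
  "DeltaMon q p = tmul q (basis ((fst p, 0), (fst p, 0))) (tpow q Dy (snd p))"

definition Delta :: "'k::field \<Rightarrow> 'k H \<Rightarrow> 'k HH" where
  "Delta q f = (\<lambda>t. \<Sum>p \<in> supp f. f p * DeltaMon q p t)"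

definition eps :: "'k::field H \<Rightarrow> 'k" where
  "eps f = (\<Sum>p \<in> supp f. f p * (if snd p = 0 then 1 else 0))"

definition tensor_map :: "('k::field H \<Rightarrow> 'k H) \<Rightarrow> 'k HH \<Rightarrow> 'k HH" where
  "tensor_map \<phi> t = (\<lambda>z. \<Sum>p \<in> supp t.
      t p * \<phi> (basis (fst p)) (fst z) * \<phi> (basis (snd p)) (snd z))"

definition coalg_aut :: "'k::field \<Rightarrow> ('k H \<Rightarrow> 'k H) \<Rightarrow> bool" where
  "coalg_aut q \<phi> \<longleftrightarrow>
     (\<forall>f. fin f \<longrightarrow> fin (\<phi> f)) \<and>
     (\<forall>f g. fin f \<longrightarrow> fin g \<longrightarrow> \<phi> (\<lambda>p. f p + g p) = (\<lambda>p. \<phi> f p + \<phi> g p)) \<and>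
     (\<forall>c f. fin f \<longrightarrow> \<phi> (\<lambda>p. c * f p) = (\<lambda>p. c * \<phi> f p)) \<and>
     bij_betw \<phi> {f. fin f} {f. fin f} \<and>
     (\<forall>f. fin f \<longrightarrow> Delta q (\<phi> f) = tensor_map \<phi> (Delta q f)) \<and>
     (\<forall>f. fin f \<longrightarrow> eps (\<phi> f) = eps f)"

end

theory Submission imports Defs begin

lemma supp_basis: "supp (basis u :: 'a \<Rightarrow> 'k::{zero_neq_one}) = {u}"
  by (auto simp: supp_def basis_def)

lemma supp_Dy: "supp (Dy :: 'k::field HH) = {((0,1),(1,0)), ((0,0),(0,1))}"
  by (auto simp: supp_def Dy_def basis_def)

lemma tmul_Dy:
  fixes s :: "'k::field HH"
  shows "tmul q s Dy ((a,b),(c,d)) =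
    (if 1 \<le> b then q ^ d * s ((a,b-1),(c-1,d)) else 0) + (if 1 \<le> d then s ((a,b),(c,d-1)) else 0)"
proof -
  define u1 :: "(int\<times>nat)\<times>(int\<times>nat)" where "u1 = ((0,1),(1,0))"
  define u2 :: "(int\<times>nat)\<times>(int\<times>nat)" where "u2 = ((0,0),(0,1))"
  define x1 :: "(int\<times>nat)\<times>(int\<times>nat)" where "x1 = ((a,b-1),(c-1,d))"
  define x2 :: "(int\<times>nat)\<times>(int\<times>nat)" where "x2 = ((a,b),(c,d-1))"
  define F where "F = (\<lambda>(x::(int\<times>nat)\<times>(int\<times>nat), y::(int\<times>nat)\<times>(int\<times>nat)). s x * Dy y * q powi (int (snd (fst x)) * fst (fst y) + int (snd (snd x)) * fst (snd y)))"
  define A where "A = {(x, y). x \<in> supp s \<and> y \<in> supp (Dy::'k HH) \<and>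
        fst (fst x) + fst (fst y) = fst (fst ((a,b),(c,d))) \<and> snd (fst x) + snd (fst y) = snd (fst ((a,b),(c,d))) \<and>
        fst (snd x) + fst (snd y) = fst (snd ((a,b),(c,d))) \<and> snd (snd x) + snd (snd y) = snd (snd ((a,b),(c,d)))}"
  define B where "B = (if 1 \<le> b then {(x1,u1)} else {}) \<union> (if 1 \<le> d then {(x2,u2)} else {})"
  have eq: "tmul q s Dy ((a,b),(c,d)) = sum F A"
    unfolding tmul_def F_def A_def by simp
  have AB: "A \<subseteq> B"
    unfolding A_def B_def supp_Dy u1_def u2_def x1_def x2_def by auto
  have BA: "\<forall>i\<in>B - A. F i = 0"
    unfolding A_def B_def supp_Dy u1_def u2_def x1_def x2_def F_def by (auto simp: supp_def)
  have "sum F A = sum F B"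
    by (rule sum.mono_neutral_left) (use AB BA B_def in auto)
  also have "\<dots> = (if 1 \<le> b then F (x1,u1) else 0) + (if 1 \<le> d then F (x2,u2) else 0)"
    unfolding B_def by (auto simp: u1_def u2_def)
  also have "F (x1,u1) = q ^ d * s ((a,b-1),(c-1,d))"
    by (simp add: F_def x1_def u1_def Dy_def basis_def power_int_of_nat)
  also have "F (x2,u2) = s ((a,b),(c,d-1))"
    by (simp add: F_def x2_def u2_def Dy_def basis_def)
  finally show ?thesis using eq by simp
qed

lemma tmul_basis_left:
  fixes t :: "'k::field HH"
  shows "tmul q (basis ((n,0),(n,0))) t ((a,b),(c,d)) = t ((a-n,b),(c-n,d))"
proof -
  define u :: "(int\<times>nat)\<times>(int\<times>nat)" where "u = ((n,0),(n,0))"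
  define y :: "(int\<times>nat)\<times>(int\<times>nat)" where "y = ((a-n,b),(c-n,d))"
  define F where "F = (\<lambda>(x::(int\<times>nat)\<times>(int\<times>nat), y::(int\<times>nat)\<times>(int\<times>nat)). basis u x * t y * q powi (int (snd (fst x)) * fst (fst y) + int (snd (snd x)) * fst (snd y)))"
  define A where "A = {(x, y). x \<in> supp (basis u :: 'k HH) \<and> y \<in> supp t \<and>
        fst (fst x) + fst (fst y) = fst (fst ((a,b),(c,d))) \<and> snd (fst x) + snd (fst y) = snd (fst ((a,b),(c,d))) \<and>
        fst (snd x) + fst (snd y) = fst (snd ((a,b),(c,d))) \<and> snd (snd x) + snd (snd y) = snd (snd ((a,b),(c,d)))}"
  have eq: "tmul q (basis u) t ((a,b),(c,d)) = sum F A"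
    unfolding tmul_def F_def A_def by simp
  have AB: "A \<subseteq> {(u,y)}"
    unfolding A_def supp_basis u_def y_def by auto
  have BA: "\<forall>i\<in>{(u,y)} - A. F i = 0"
    unfolding A_def supp_basis u_def y_def F_def by (auto simp: supp_def)
  have "sum F A = sum F {(u,y)}"
    by (rule sum.mono_neutral_left) (use AB BA in auto)
  also have "\<dots> = t y" by (simp add: F_def u_def basis_def)
  finally show ?thesis using eq by (simp add: u_def y_def)
qed


lemma tpow_supp:
  "tpow q (Dy::'k::field HH) m ((a,b),(c,d)) \<noteq> 0 \<Longrightarrow> a = 0 \<and> c = int b \<and> b + d = m"
proof (induction m arbitrary: a b c d)
  case 0
  then show ?case by (auto simp: basis_def split: if_splits)
next
  case (Suc m)
  from Suc.prems have "(1 \<le> b \<and> tpow q Dy m ((a,b-1),(c-1,d)) \<noteq> 0) \<or> (1 \<le> d \<and> tpow q Dy m ((a,b),(c,d-1)) \<noteq> 0)"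
    by (auto simp: tmul_Dy split: if_splits)
  then show ?case
  proof
    assume h: "1 \<le> b \<and> tpow q Dy m ((a,b-1),(c-1,d)) \<noteq> 0"
    then have "a = 0 \<and> c - 1 = int (b-1) \<and> b - 1 + d = m" using Suc.IH by blast
    then show ?thesis using h by auto
  next
    assume h: "1 \<le> d \<and> tpow q Dy m ((a,b),(c,d-1)) \<noteq> 0"
    then have "a = 0 \<and> c = int b \<and> b + (d - 1) = m" using Suc.IH by blast
    then show ?thesis using h by auto
  qed
qed

lemma tpow_0: "tpow q (Dy::'k::field HH) m ((0,0),(0,m)) = 1"
  by (induction m) (auto simp: tmul_Dy basis_def)

lemma tpow_m: "tpow q (Dy::'k::field HH) m ((0,m),(int m,0)) = 1"
proof (induction m)
  case 0 then show ?case by (simp add: basis_def)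
next
  case (Suc m)
  then show ?case by (simp add: tmul_Dy)
qed

lemma tpow_1: "tpow q (Dy::'k::field HH) (Suc m) ((0,1),(1,m)) = (\<Sum>i<Suc m. q^i)"
proof (induction m)
  case 0 then show ?case by (simp add: tmul_Dy basis_def)
next
  case (Suc m)
  have "tpow q (Dy::'k HH) (Suc (Suc m)) ((0,1),(1,Suc m)) = q ^ Suc m * tpow q Dy (Suc m) ((0,0),(0,Suc m)) + tpow q Dy (Suc m) ((0,1),(1,m))"
    unfolding tpow.simps(2)[of q Dy "Suc m"] tmul_Dy by simp
  then show ?case using Suc tpow_0[of q "Suc m"] by (simp del: tpow.simps)
qed

lemma DeltaMon_eq: "DeltaMon q (n,m) ((a,b),(c,d)) = tpow q (Dy::'k::field HH) m ((a-n,b),(c-n,d))"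
  by (simp add: DeltaMon_def tmul_basis_left)

lemma Delta_eq:
  fixes f :: "'k::field H"
  assumes "fin f"
  shows "Delta q f ((a,b),(c,d)) = (if c = a + int b then f (a, b+d) * tpow q Dy (b+d) ((0,b),(int b,d)) else 0)"
proof -
  define G where "G = (\<lambda>p. f p * DeltaMon q p ((a,b),(c,d)))"
  have fs: "finite (supp f)" using assms by (simp add: fin_def)
  have z: "\<forall>p\<in>supp f - (supp f \<inter> {(a,b+d)}). G p = 0"
  proof
    fix p assume "p \<in> supp f - (supp f \<inter> {(a,b+d)})"
    then have ne: "p \<noteq> (a,b+d)" by auto
    obtain n m where p: "p = (n,m)" by (cases p)
    show "G p = 0"
    proof (rule ccontr)
      assume "G p \<noteq> 0"
      then have "tpow q (Dy::'k HH) m ((a-n,b),(c-n,d)) \<noteq> 0" by (simp add: G_def p DeltaMon_eq)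
      from tpow_supp[OF this] ne p show False by auto
    qed
  qed
  have "Delta q f ((a,b),(c,d)) = sum G (supp f)" by (simp add: Delta_def G_def)
  also have "\<dots> = sum G (supp f \<inter> {(a,b+d)})"
    by (rule sum.mono_neutral_right) (use fs z in auto)
  also have "\<dots> = (if c = a + int b then f (a, b+d) * tpow q Dy (b+d) ((0,b),(int b,d)) else 0)"
  proof (cases "(a,b+d) \<in> supp f")
    case True
    then have "sum G (supp f \<inter> {(a,b+d)}) = G (a,b+d)" by (simp add: Int_absorb1)
    also have "\<dots> = f (a, b+d) * tpow q Dy (b+d) ((0,b),(c-a,d))" by (simp add: G_def DeltaMon_eq)
    finally show ?thesis using tpow_supp[of q "b+d" 0 b "c-a" d] by (auto simp: algebra_simps)
  next
    case False
    then show ?thesis by (auto simp: supp_def)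
  qed
  finally show ?thesis .
qed


lemma fin_mon: "fin (mon n m :: 'k::field H)"
  by (simp add: fin_def mon_def supp_basis)

lemma fin_smul: "fin f \<Longrightarrow> fin (\<lambda>p. (c::'k::field) * f p)"
  unfolding fin_def supp_def by (rule finite_subset[of _ "{a. f a \<noteq> 0}"]) auto

lemma tm_basis: "tensor_map (\<phi>::'k::field H \<Rightarrow> 'k H) (basis u) z = \<phi> (basis (fst u)) (fst z) * \<phi> (basis (snd u)) (snd z)"
  unfolding tensor_map_def supp_basis by (simp add: basis_def)

lemma tm_basis2:
  fixes \<phi> :: "'k::field H \<Rightarrow> 'k H"
  assumes "u \<noteq> v"
  shows "tensor_map \<phi> (\<lambda>p. basis u p + basis v p) z =
     \<phi> (basis (fst u)) (fst z) * \<phi> (basis (snd u)) (snd z) + \<phi> (basis (fst v)) (fst z) * \<phi> (basis (snd v)) (snd z)"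
proof -
  have S: "supp (\<lambda>p. basis u p + basis v p :: 'k::field) = {u, v}"
    using assms by (auto simp: supp_def basis_def)
  show ?thesis unfolding tensor_map_def S using assms by (simp add: basis_def)
qed

lemma Delta_mon0: "Delta q (mon n 0 :: 'k::field H) = basis ((n,0),(n,0))"
proof (rule ext)
  fix z :: "(int \<times> nat) \<times> (int \<times> nat)"
  obtain a b c d where z: "z = ((a,b),(c,d))" by (metis prod.collapse)
  show "Delta q (mon n 0 :: 'k H) z = basis ((n,0),(n,0)) z"
    unfolding z Delta_eq[OF fin_mon] using tpow_0[of q 0]
    by (auto simp: mon_def basis_def)
qed

lemma Delta_mon1: "Delta q (mon n 1 :: 'k::field H) = (\<lambda>p. basis ((n,1),(n+1,0)) p + basis ((n,0),(n,1)) p)"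
proof (rule ext)
  fix z :: "(int \<times> nat) \<times> (int \<times> nat)"
  obtain a b c d where z: "z = ((a,b),(c,d))" by (metis prod.collapse)
  have "b + d = 1 \<Longrightarrow> (b = 0 \<and> d = 1) \<or> (b = 1 \<and> d = 0)" by auto
  then show "Delta q (mon n 1 :: 'k H) z = basis ((n,1),(n+1,0)) z + basis ((n,0),(n,1)) z"
    unfolding z Delta_eq[OF fin_mon] using tpow_0[of q 1] tpow_m[of q 1]
    by (auto simp: mon_def basis_def)
qed

lemma geo_ne0:
  fixes q :: "'k::field"
  assumes "\<forall>n::nat. n > 0 \<longrightarrow> q ^ n \<noteq> 1" and "m > 0"
  shows "(\<Sum>i<m. q^i) \<noteq> 0"
proof -
  have q1: "q \<noteq> 1" using assms(1)[rule_format, of 1] by simp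
  have "q ^ m \<noteq> 1" using assms by blast
  then show ?thesis using q1 by (simp add: sum_gp_strict)
qed


lemma grouplike:
  fixes q :: "'k::field" and g :: "'k H"
  assumes fg: "fin g" and ne: "g \<noteq> (\<lambda>p. 0)"
    and D: "\<And>z. Delta q g z = g (fst z) * g (snd z)"
  shows "\<exists>a. g = mon a 0"
proof -
  have key: "c = a + int b" if "g (a,b) \<noteq> 0" "g (c,d) \<noteq> 0" for a b c d
  proof (rule ccontr)
    assume "c \<noteq> a + int b"
    then have "Delta q g ((a,b),(c,d)) = 0" by (simp add: Delta_eq[OF fg])
    then show False using D[of "((a,b),(c,d))"] that by simp
  qed
  obtain a b where ab: "g (a,b) \<noteq> 0" using ne by fastforce
  have b0: "b = 0" using key[OF ab ab] by simp
  have only: "p = (a,0)" if "g p \<noteq> 0" for p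
  proof -
    obtain c d where p: "p = (c,d)" by (cases p)
    have "c = a + int b" "a = c + int d" using key[OF ab that[unfolded p]] key[OF that[unfolded p] ab] by auto
    then show ?thesis using p b0 by simp
  qed
  have ga: "g (a,0) \<noteq> 0" using ab b0 by simp
  have "g (a,0) * g (a,0) = Delta q g ((a,0),(a,0))" using D[of "((a,0),(a,0))"] by simp
  also have "\<dots> = g (a,0)" using tpow_0[of q 0] by (simp add: Delta_eq[OF fg])
  finally have g1: "g (a,0) = 1" using ga by simp
  have "g = mon a 0"
  proof (rule ext)
    fix p show "g p = mon a 0 p"
      using only[of p] g1 by (cases "p = (a,0)") (auto simp: mon_def basis_def)
  qed
  then show ?thesis by blast
qed


lemma skew:
  fixes q :: "'k::field" and h :: "'k H"
  assumes fh: "fin h" and Q: "\<forall>n::nat. n > 0 \<longrightarrow> q ^ n \<noteq> 1"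
    and D: "\<And>z. Delta q h z = h (fst z) * mon s' 0 (snd z) + mon s 0 (fst z) * h (snd z)"
  shows "h = (\<lambda>p. h (s,1) * mon s 1 p + h (s',0) * (mon s' 0 p - mon s 0 p))"
    and "h (s,1) \<noteq> 0 \<Longrightarrow> s' = s + 1"
proof -
  have E: "(if c = a + int b then h (a, b+d) * tpow q Dy (b+d) ((0,b),(int b,d)) else 0)
      = h (a,b) * mon s' 0 (c,d) + mon s 0 (a,b) * h (c,d)" for a b c d
    using D[of "((a,b),(c,d))"] by (simp add: Delta_eq[OF fh])
  have i: "h (a,m) = 0" if "m \<ge> 1" "a \<noteq> s" for a m
    using E[of a a 0 m] tpow_0[of q m] that by (simp add: mon_def basis_def)
  have ii: "h (a,m) = 0" if "m \<ge> 1" "a + int m \<noteq> s'" for a m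
    using E[of "a + int m" a m 0] tpow_m[of q m] that by (simp add: mon_def basis_def)
  have iii: "h (a,m) = 0" if "m \<ge> 2" for a m
  proof -
    define k where "k = m - 2"
    have m: "m = Suc (Suc k)" using that k_def by simp
    have "h (a,m) * (\<Sum>i<Suc (Suc k). q^i) = 0"
      using E[of "a+1" a 1 "Suc k"] tpow_1[of q "Suc k"] by (simp add: mon_def basis_def m)
    then show ?thesis using geo_ne0[OF Q, of "Suc (Suc k)"] by simp
  qed
  have iv: "h (a,0) = 0" if "a \<noteq> s" "a \<noteq> s'" for a
    using E[of a a 0 0] that by (simp add: mon_def basis_def)
  have v: "h (s,0) = 0" if "s = s'"
  proof -
    have "h (s,0) * tpow q Dy 0 ((0,0),(0,0)) = h (s,0) + h (s,0)"
      using E[of s s 0 0] that by (simp add: mon_def basis_def)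
    then have "h (s,0) = h (s,0) + h (s,0)" using tpow_0[of q 0] by (simp only: mult_1_right)
    then show ?thesis by (metis add_cancel_left_right)
  qed
  have vi: "h (s,0) + h (s',0) = 0" if "s \<noteq> s'"
    using E[of s' s 0 0] that by (simp add: mon_def basis_def)
  show eq: "h = (\<lambda>p. h (s,1) * mon s 1 p + h (s',0) * (mon s' 0 p - mon s 0 p))"
  proof (rule ext)
    fix p :: "int \<times> nat"
    obtain a m where p: "p = (a,m)" by (cases p)
    consider "m = 0" | "m = 1" | "m \<ge> 2" by linarith
    then show "h p = h (s,1) * mon s 1 p + h (s',0) * (mon s' 0 p - mon s 0 p)"
    proof cases
      case 1
      have m1: "mon s 1 p = (0::'k)" using 1 by (simp add: p mon_def basis_def)
      show ?thesis
      proof (cases "a = s")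
        case as: True
        show ?thesis
        proof (cases "s = s'")
          case True
          then show ?thesis using v as 1 m1 by (simp add: p mon_def basis_def)
        next
          case False
          have "h (s,0) = - h (s',0)" using vi[OF False] by (simp add: eq_neg_iff_add_eq_0)
          then show ?thesis using False as 1 m1 by (simp add: p mon_def basis_def)
        qed
      next
        case ans: False
        show ?thesis
        proof (cases "a = s'")
          case True
          then show ?thesis using ans 1 m1 by (simp add: p mon_def basis_def)
        next
          case False
          then show ?thesis using ans iv[of a] 1 m1 by (simp add: p mon_def basis_def)
        qed
      qed
    next
      case 2
      then show ?thesis using i[of 1 a] by (cases "a = s") (auto simp: p mon_def basis_def)
    next
      case 3
      then show ?thesis using iii[of m a] by (auto simp: p mon_def basis_def)
    qed
  qed
  show "s' = s + 1" if "h (s,1) \<noteq> 0"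
    using ii[of 1 s] that by auto
qed


theorem lemma2p2:
  fixes q :: "'k::field" and \<phi> :: "'k H \<Rightarrow> 'k H"
  assumes "q \<noteq> 0" and "\<forall>n::nat. n > 0 \<longrightarrow> q ^ n \<noteq> 1"
    and "coalg_aut q \<phi>"
  shows "\<exists>r::int. \<forall>n::int.
           \<phi> (mon n 0) = mon (n + r) 0 \<and>
           (\<exists>\<alpha> \<beta>::'k. \<alpha> \<noteq> 0 \<and>
              \<phi> (mon n 1) = (\<lambda>p. \<alpha> * mon (n + r) 1 p
                                  + \<beta> * (mon (n + r + 1) 0 p - mon (n + r) 0 p)))"
proof -
  note Q = assms(2)
  have finp: "\<And>f. fin f \<Longrightarrow> fin (\<phi> f)" using assms(3) by (simp add: coalg_aut_def)
  have addp: "\<And>f g. fin f \<Longrightarrow> fin g \<Longrightarrow> \<phi> (\<lambda>p. f p + g p) = (\<lambda>p. \<phi> f p + \<phi> g p)"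
    using assms(3) by (simp add: coalg_aut_def)
  have smulp: "\<And>c f. fin f \<Longrightarrow> \<phi> (\<lambda>p. c * f p) = (\<lambda>p. c * \<phi> f p)"
    using assms(3) by (simp add: coalg_aut_def)
  have inj: "inj_on \<phi> {f. fin f}" using assms(3) by (simp add: coalg_aut_def bij_betw_def)
  have Dp: "\<And>f. fin f \<Longrightarrow> Delta q (\<phi> f) = tensor_map \<phi> (Delta q f)"
    using assms(3) by (simp add: coalg_aut_def)
  have phi0: "\<phi> (\<lambda>p. 0) = (\<lambda>p. 0)"
    using smulp[of "mon 0 0" 0, OF fin_mon] by simp
  have fin0: "fin (\<lambda>p. 0::'k)" by (simp add: fin_def supp_def)
  have nz: "\<phi> (mon n m) \<noteq> (\<lambda>p. 0)" for n m
  proof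
    assume "\<phi> (mon n m) = (\<lambda>p. 0)"
    then have "\<phi> (mon n m) = \<phi> (\<lambda>p. 0)" using phi0 by simp
    then have "mon n m = (\<lambda>p. 0::'k)" using inj fin0 fin_mon by (auto dest: inj_onD)
    then show False by (metis mon_def basis_def zero_neq_one)
  qed
  have "\<forall>n. \<exists>a. \<phi> (mon n 0) = mon a 0"
  proof
    fix n
    show "\<exists>a. \<phi> (mon n 0) = mon a 0"
    proof (rule grouplike)
      show "fin (\<phi> (mon n 0))" by (rule finp[OF fin_mon])
      show "\<phi> (mon n 0) \<noteq> (\<lambda>p. 0)" by (rule nz)
      fix z
      show "Delta q (\<phi> (mon n 0)) z = \<phi> (mon n 0) (fst z) * \<phi> (mon n 0) (snd z)"
        unfolding Dp[OF fin_mon] Delta_mon0 tm_basis by (simp add: mon_def)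
    qed
  qed
  then obtain \<sigma> where sig: "\<And>n. \<phi> (mon n 0) = mon (\<sigma> n) 0" by metis
  have H: "\<sigma> (n+1) = \<sigma> n + 1 \<and> (\<exists>\<alpha> \<beta>::'k. \<alpha> \<noteq> 0 \<and>
      \<phi> (mon n 1) = (\<lambda>p. \<alpha> * mon (\<sigma> n) 1 p + \<beta> * (mon (\<sigma> n + 1) 0 p - mon (\<sigma> n) 0 p)))" for n
  proof -
    define h where "h = \<phi> (mon n 1)"
    define s where "s = \<sigma> n"
    define s' where "s' = \<sigma> (n+1)"
    have fh: "fin h" unfolding h_def by (rule finp[OF fin_mon])
    have D: "Delta q h z = h (fst z) * mon s' 0 (snd z) + mon s 0 (fst z) * h (snd z)" for z
    proof -
      have "Delta q h z = tensor_map \<phi> (\<lambda>p. basis ((n,1),(n+1,0)) p + basis ((n,0),(n,1)) p) z"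
        unfolding h_def Dp[OF fin_mon] Delta_mon1 by (rule refl)
      also have "\<dots> = h (fst z) * mon s' 0 (snd z) + mon s 0 (fst z) * h (snd z)"
        by (simp add: tm_basis2 h_def s_def s'_def sig flip: mon_def)
      finally show ?thesis .
    qed
    note sk = skew[OF fh Q D]
    have a0: "h (s,1) \<noteq> 0"
    proof
      assume h0: "h (s,1) = 0"
      define \<beta> where "\<beta> = h (s',0)"
      define w where "w = (\<lambda>p. (\<lambda>p. \<beta> * mon (n+1) 0 p) p + (\<lambda>p. (-\<beta>) * mon n 0 p) p)"
      have f1: "fin (\<lambda>p. \<beta> * mon (n+1) 0 p)" by (rule fin_smul[OF fin_mon])
      have f2: "fin (\<lambda>p. (-\<beta>) * mon n 0 p)" by (rule fin_smul[OF fin_mon])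
      have fw: "fin w"
      proof -
        have "supp w \<subseteq> supp (\<lambda>p. \<beta> * mon (n+1) 0 p) \<union> supp (\<lambda>p. (-\<beta>) * mon n 0 p)"
          unfolding w_def supp_def by auto
        then show ?thesis using f1 f2 unfolding fin_def by (meson finite_UnI finite_subset)
      qed
      have "\<phi> w = (\<lambda>p. \<phi> (\<lambda>p. \<beta> * mon (n+1) 0 p) p + \<phi> (\<lambda>p. (-\<beta>) * mon n 0 p) p)"
        unfolding w_def by (rule addp[OF f1 f2])
      also have "\<dots> = (\<lambda>p. \<beta> * mon s' 0 p + (-\<beta>) * mon s 0 p)"
        by (simp only: smulp[OF fin_mon] sig s_def s'_def)
      also have "\<dots> = h" using sk(1) h0 by (simp add: algebra_simps \<beta>_def)
      finally have "\<phi> w = \<phi> (mon n 1)" by (simp add: h_def)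
      then have "w = mon n 1" using inj fw fin_mon by (auto dest: inj_onD)
      then have "w (n,1) = mon n 1 (n,1)" by simp
      then show False by (simp add: w_def mon_def basis_def)
    qed
    have "s' = s + 1" using sk(2)[OF a0] .
    then show ?thesis using a0 sk(1) unfolding h_def s_def s'_def by auto
  qed
  have lin: "\<sigma> n = n + \<sigma> 0" for n
  proof (induction n rule: int_induct[where k = 0])
    case base then show ?case by simp
  next
    case (step1 i) then show ?case using H[of i] by simp
  next
    case (step2 i) then show ?case using H[of "i - 1"] by simp
  qed
  show ?thesis
  proof (rule exI[of _ "\<sigma> 0"], rule allI)
    fix n
    show "\<phi> (mon n 0) = mon (n + \<sigma> 0) 0 \<and> (\<exists>\<alpha> \<beta>::'k. \<alpha> \<noteq> 0 \<and>
              \<phi> (mon n 1) = (\<lambda>p. \<alpha> * mon (n + \<sigma> 0) 1 p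
                                  + \<beta> * (mon (n + \<sigma> 0 + 1) 0 p - mon (n + \<sigma> 0) 0 p)))"
    proof
    show "\<phi> (mon n 0) = mon (n + \<sigma> 0) 0" using sig[of n] lin[of n] by simp
    show "\<exists>\<alpha> \<beta>::'k. \<alpha> \<noteq> 0 \<and>
              \<phi> (mon n 1) = (\<lambda>p. \<alpha> * mon (n + \<sigma> 0) 1 p
                                  + \<beta> * (mon (n + \<sigma> 0 + 1) 0 p - mon (n + \<sigma> 0) 0 p))"
      using H[of n] lin[of n] by simp
  qed
  qed
qed

end
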